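(* Let $q\geq 2$ and $k$ be relatively prime natural numbers, and let $r$ be the order of $q$ in $(\mathbb{Z}/k\mathbb{Z})^\times$. For any $u\in\mathbb{N}$ relatively prime to $r$, there exists a natural number $k'$ such that $k\mid k'$ and $\gamma_{q^u}(k')=\gamma_q(k)$.
   Context: For an integer $b\geq 2$, $\gamma_b(m)$ denotes the sum of the digits of the base-$b$ expansion of the natural number $m$. *)

theory Defs
  imports "HOL-Number_Theory.Number_Theory"
begin

fun digit_sum :: "nat \<Rightarrow> nat \<Rightarrow> nat" where
  "digit_sum b m = (if b < 2 \<or> m = 0 then 0 else m mod b + digit_sum b (m div b))"

end

theory Submission
  imports Defs
begin

declare digit_sum.simps[simp del]

lemma ds0[simp]: "digit_sum b 0 = 0"
  by (simp add: digit_sum.simps)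

lemma ds_rec: "b \<ge> 2 \<Longrightarrow> m > 0 \<Longrightarrow> digit_sum b m = m mod b + digit_sum b (m div b)"
  by (subst digit_sum.simps) simp

lemma ds_small: "b \<ge> 2 \<Longrightarrow> c < b \<Longrightarrow> digit_sum b c = c"
proof (cases "c = 0")
  case False
  assume "b \<ge> 2" "c < b"
  then show ?thesis using ds_rec[of b c] False by simp
qed simp

lemma ds_split:
  assumes "b \<ge> 2" "a < b ^ p"
  shows "digit_sum b (a + b ^ p * m) = digit_sum b a + digit_sum b m"
  using assms(2)
proof (induction p arbitrary: a)
  case 0
  then show ?case by simp
next
  case (Suc p)
  show ?case
  proof (cases "a = 0 \<and> m = 0")
    case True then show ?thesis by simp
  next
    case False
    have pos: "a + b ^ Suc p * m > 0" using False assms(1) by auto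
    have e: "a + b ^ Suc p * m = a + b * (b ^ p * m)" by (simp add: mult.assoc)
    have m1: "(a + b ^ Suc p * m) mod b = a mod b" unfolding e by (rule mod_mult_self2)
    have d1: "(a + b ^ Suc p * m) div b = a div b + b ^ p * m"
      unfolding e using assms(1) by (simp only: div_mult_self2)
    have "a < b ^ p * b" using Suc.prems by (simp add: mult.commute)
    hence lt: "a div b < b ^ p" by (rule less_mult_imp_div_less)
    have "digit_sum b (a + b ^ Suc p * m) = a mod b + digit_sum b (a div b + b ^ p * m)"
      using ds_rec[OF assms(1) pos] m1 d1 by simp
    also have "\<dots> = a mod b + digit_sum b (a div b) + digit_sum b m"
      using Suc.IH[OF lt] by simp
    also have "a mod b + digit_sum b (a div b) = digit_sum b a"
      by (cases "a = 0") (simp_all add: ds_rec[OF assms(1)])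
    finally show ?thesis .
  qed
qed

fun g :: "nat \<Rightarrow> nat \<Rightarrow> nat \<Rightarrow> nat" where
  "g q W m = (if q < 2 \<or> m = 0 then 0 else m mod q + W * g q W (m div q))"

declare g.simps[simp del]

lemma g_ds:
  assumes "q \<ge> 2" "Q \<ge> q" "w \<ge> 1"
  shows "digit_sum Q (g q (Q ^ w) m) = digit_sum q m"
proof (induction m rule: less_induct)
  case (less m)
  show ?case
  proof (cases "m = 0")
    case True then show ?thesis using assms by (simp add: g.simps)
  next
    case False
    have Q2: "Q \<ge> 2" using assms by simp
    have "m mod q < q" using assms by simp
    have "Q \<le> Q ^ w" using assms by (intro self_le_power) auto
    hence lt: "m mod q < Q ^ w" using assms \<open>m mod q < q\<close> by linarith
    have lt2: "m mod q < Q" using assms \<open>m mod q < q\<close> by linarith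
    have "digit_sum Q (g q (Q ^ w) m) = digit_sum Q (m mod q + Q ^ w * g q (Q ^ w) (m div q))"
      using False assms by (simp add: g.simps)
    also have "\<dots> = m mod q + digit_sum q (m div q)"
      using ds_split[OF Q2 lt] ds_small[OF Q2 lt2] less.IH[of "m div q"] False assms by simp
    also have "\<dots> = digit_sum q m" using ds_rec[of q m] False assms by simp
    finally show ?thesis .
  qed
qed

lemma g_cong:
  assumes "q \<ge> 2" "[W = q] (mod k)"
  shows "[g q W m = m] (mod k)"
proof (induction m rule: less_induct)
  case (less m)
  show ?case
  proof (cases "m = 0")
    case True then show ?thesis using assms by (simp add: g.simps)
  next
    case False
    have "[m mod q + W * g q W (m div q) = m mod q + q * (m div q)] (mod k)"
      using less.IH[of "m div q"] False assms by (intro cong_add cong_mult) auto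
    then show ?thesis using False assms by (simp add: g.simps)
  qed
qed

theorem lemma3:
  fixes q k u :: nat
  assumes "q \<ge> 2" and "coprime q k" and "u \<ge> 1" and "coprime u (ord k q)"
  shows "\<exists>k'::nat. k dvd k' \<and> digit_sum (q ^ u) k' = digit_sum q k"
proof -
  define r where "r = ord k q"
  have ck: "coprime k q" using assms(2) by (simp add: coprime_commute)
  have r0: "r > 0" using ck by (simp add: r_def)
  obtain v where v: "[u * v = Suc 0] (mod r)"
    using cong_solve_coprime_nat assms(4) r_def by blast
  define w where "w = v + r"
  have w1: "w \<ge> 1" using r0 by (simp add: w_def)
  have "[u * w = u * v] (mod r)" unfolding w_def
    by (simp add: algebra_simps cong_def)
  with v have "[u * w = 1] (mod r)" using cong_trans by fastforce
  hence c: "[q ^ (u * w) = q ^ 1] (mod k)"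
    using order_divides_expdiff[OF ck] r_def by blast
  have c2: "[(q ^ u) ^ w = q] (mod k)" using c by (simp add: power_mult)
  have Q: "q ^ u \<ge> q" using assms(1,3)
    by (intro self_le_power) auto
  show ?thesis
  proof (intro exI conjI)
    show "k dvd g q ((q ^ u) ^ w) k"
      using g_cong[OF assms(1) c2, of k] by (simp add: cong_0_iff[symmetric] cong_def)
    show "digit_sum (q ^ u) (g q ((q ^ u) ^ w) k) = digit_sum q k"
      using g_ds[OF assms(1) Q w1] .
  qed
qed

end
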